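(* Let $G$ be a finite directed multigraph with vertex set $V$. The map $$H\mapsto P(G)_H:=\{\vec x\in P(G)\mid x_e=0 \text{ for all } e\notin E(H)\}$$ is an isomorphism of posets from the set of full subgraphs $H$ of $G$ with non-empty edge set (ordered by inclusion of edge sets) onto the face poset of $P(G)$ (faces ordered by inclusion). Moreover, identifying $\mathbb{R}^{E(H)}$ with its image under the coordinate inclusion $\mathbb{R}^{E(H)}\hookrightarrow\mathbb{R}^{E(G)}$, one has $P(H)=P(G)_H$, and $$\dim P(G)_H=|E(H)|-|V|+c(H)-1,$$ where $c(H)$ is the number of connected components of $H$ (isolated vertices counted as components).
   Context: For a directed multigraph $G$: a walk is a sequence of edges $(e_1,\dots,e_k)$ with $\mathrm{ar}(e_i)=\mathrm{st}(e_{i+1})$; a cycle is a walk with $\mathrm{st}(e_1)=\mathrm{ar}(e_k)$; a path is a walk with distinct edges and distinct vertices except possibly $\mathrm{st}(e_1)=\mathrm{ar}(e_k)$; a simple cycle is a non-empty cycle that is a path. For a non-empty cycle $\mathcal{C}$, $(\vec{e}_{\mathcal{C}})_e=n_e(\mathcal{C})/|\mathcal{C}|$. $P(G)=\mathrm{conv}\{\vec{e}_{\mathcal{C}}\mid\mathcal{C}\text{ simple cycle of }G\}\subset\mathbb{R}^{E(G)}$. A subgraph of $G$ here means $H=(V,E(H))$ with the same vertex set and $E(H)\subseteq E(G)$ (as multisets); $H$ is full if every edge of $H$ lies on a cycle of $H$. A face of a polytope $\mathfrak p\subset\mathbb{R}^n$ is a set of the form $\mathfrak p_f=\arg\min_{\mathfrak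 p} f$ for some linear form $f:\mathbb{R}^n\to\mathbb{R}$ (faces are thus non-empty, and $\mathfrak p$ itself is a face). The dimension of a polytope is that of its affine span. *)

theory Defs
  imports "HOL-Analysis.Analysis"
begin

text \<open>Directed multigraph: edges are the elements of a finite type 'e (so parallel
edges are distinct elements), vertices form a finite set V, and
st, ar :: 'e \<Rightarrow> 'v are the start and arrival maps.  A subgraph H with the same
vertex set is given by its edge set F :: 'e set.\<close>

definition is_walk :: "('e \<Rightarrow> 'v) \<Rightarrow> ('e \<Rightarrow> 'v) \<Rightarrow> 'e list \<Rightarrow> bool" where
  "is_walk st ar es \<longleftrightarrow> (\<forall>i. Suc i < length es \<longrightarrow> ar (es ! i) = st (es ! Suc i))"

definition is_cycle :: "('e \<Rightarrow> 'v) \<Rightarrow> ('e \<Rightarrow> 'v) \<Rightarrow> 'e list \<Rightarrow> bool" where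
  "is_cycle st ar es \<longleftrightarrow> is_walk st ar es \<and> (es \<noteq> [] \<longrightarrow> st (hd es) = ar (last es))"

definition walk_verts :: "('e \<Rightarrow> 'v) \<Rightarrow> ('e \<Rightarrow> 'v) \<Rightarrow> 'e list \<Rightarrow> 'v list" where
  "walk_verts st ar es = st (hd es) # map ar es"

definition is_path :: "('e \<Rightarrow> 'v) \<Rightarrow> ('e \<Rightarrow> 'v) \<Rightarrow> 'e list \<Rightarrow> bool" where
  "is_path st ar es \<longleftrightarrow> is_walk st ar es \<and> distinct es \<and>
     (es = [] \<or> distinct (walk_verts st ar es) \<or>
       (st (hd es) = ar (last es) \<and> distinct (map ar es)))"

definition is_simple_cycle :: "('e \<Rightarrow> 'v) \<Rightarrow> ('e \<Rightarrow> 'v) \<Rightarrow> 'e list \<Rightarrow> bool" where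
  "is_simple_cycle st ar es \<longleftrightarrow> es \<noteq> [] \<and> is_cycle st ar es \<and> is_path st ar es"

definition cycle_vec :: "'e list \<Rightarrow> real ^ ('e::finite)" where
  "cycle_vec C = (\<chi> e. real (count_list C e) / real (length C))"

text \<open>P(H) for the subgraph with edge set F, viewed inside R^{E(G)} via the
coordinate inclusion R^{E(H)} \<hookrightarrow> R^{E(G)}.  P(G) = cycle_polytope st ar UNIV.\<close>
definition cycle_polytope :: "('e \<Rightarrow> 'v) \<Rightarrow> ('e \<Rightarrow> 'v) \<Rightarrow> 'e set \<Rightarrow> (real ^ ('e::finite)) set" where
  "cycle_polytope st ar F =
     convex hull {cycle_vec C | C. is_simple_cycle st ar C \<and> set C \<subseteq> F}"

definition is_full :: "('e \<Rightarrow> 'v) \<Rightarrow> ('e \<Rightarrow> 'v) \<Rightarrow> 'e set \<Rightarrow> bool" where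
  "is_full st ar F \<longleftrightarrow> (\<forall>e\<in>F. \<exists>C. is_cycle st ar C \<and> set C \<subseteq> F \<and> e \<in> set C)"

definition is_face :: "(real ^ ('e::finite)) set \<Rightarrow> (real ^ 'e) set \<Rightarrow> bool" where
  "is_face p S \<longleftrightarrow> S \<noteq> {} \<and>
     (\<exists>f :: real ^ 'e \<Rightarrow> real. linear f \<and> S = {x \<in> p. \<forall>y\<in>p. f x \<le> f y})"

definition restr_face :: "(real ^ ('e::finite)) set \<Rightarrow> 'e set \<Rightarrow> (real ^ 'e) set" where
  "restr_face p F = {x \<in> p. \<forall>e. e \<notin> F \<longrightarrow> x $ e = 0}"

definition conn_rel :: "'v set \<Rightarrow> ('e \<Rightarrow> 'v) \<Rightarrow> ('e \<Rightarrow> 'v) \<Rightarrow> 'e set \<Rightarrow> ('v \<times> 'v) set" where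
  "conn_rel V st ar F =
     {(u, v). u \<in> V \<and> v \<in> V \<and>
        (u, v) \<in> ({(st e, ar e) | e. e \<in> F} \<union> {(ar e, st e) | e. e \<in> F})\<^sup>*}"

definition num_components :: "'v set \<Rightarrow> ('e \<Rightarrow> 'v) \<Rightarrow> ('e \<Rightarrow> 'v) \<Rightarrow> 'e set \<Rightarrow> nat" where
  "num_components V st ar F = card (V // conn_rel V st ar F)"

end

theory Submission
  imports Defs
begin


definition nb :: "('e::finite \<Rightarrow> 'v) \<Rightarrow> ('e \<Rightarrow> 'v) \<Rightarrow> 'v \<Rightarrow> real^'e" where
  "nb st ar v = (\<chi> e. (if ar e = v then 1 else 0) - (if st e = v then 1 else 0))"
definition onev :: "real^'e::finite" where "onev = (\<chi> e. 1)"
definition QQ :: "('e::finite \<Rightarrow> 'v) \<Rightarrow> ('e \<Rightarrow> 'v) \<Rightarrow> 'e set \<Rightarrow> (real^'e) set" where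
  "QQ st ar F = {x. (\<forall>e. 0 \<le> x$e) \<and> (\<forall>e. e \<notin> F \<longrightarrow> x$e = 0) \<and>
     (\<forall>v. x \<bullet> nb st ar v = 0) \<and> x \<bullet> onev = 1}"

lemma inner_nb: "x \<bullet> nb st ar v = (\<Sum>e\<in>UNIV. if ar e = v then x$e else 0) - (\<Sum>e\<in>UNIV. if st e = v then x$e else 0)"
  unfolding nb_def inner_vec_def sum_subtractf[symmetric] by (rule sum.cong) auto

lemma inner_onev: "x \<bullet> onev = (\<Sum>e\<in>UNIV. x$e)"
  unfolding onev_def inner_vec_def by simp

lemma sum_count_if: "(\<Sum>e\<in>(UNIV::'e::finite set). if P e then real (count_list C e) else 0) = real (length (filter P C))"
proof (induction C)
  case Nil then show ?case by simp (rule sum.neutral, simp)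
next
  case (Cons a C)
  have "(\<Sum>e\<in>(UNIV::'e set). if P e then real (count_list (a#C) e) else 0)
     = (\<Sum>e\<in>(UNIV::'e set). (if P e then real (count_list C e) else 0) + (if e = a then (if P a then 1 else 0) else 0))"
    by (rule sum.cong) auto
  also have "\<dots> = real (length (filter P C)) + (if P a then 1 else 0)"
    by (simp add: sum.distrib Cons)
  finally show ?case by simp
qed

lemma count_map: "count_list (map f xs) y = length (filter (\<lambda>x. f x = y) xs)"
  by (induction xs) auto

lemma map_st_cycle:
  assumes "C \<noteq> []" "is_cycle st ar C"
  shows "map st C = ar (last C) # map ar (butlast C)"
proof (rule nth_equalityI)
  show "length (map st C) = length (ar (last C) # map ar (butlast C))" using assms by simp
next
  fix i assume i: "i < length (map st C)"
  show "map st C ! i = (ar (last C) # map ar (butlast C)) ! i"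
  proof (cases i)
    case 0 then show ?thesis using assms by (simp add: is_cycle_def hd_conv_nth)
  next
    case (Suc j)
    then have "ar (C!j) = st (C ! Suc j)" using assms i by (auto simp: is_cycle_def is_walk_def)
    then show ?thesis using Suc i by (simp add: nth_butlast)
  qed
qed

lemma count_st_ar:
  assumes "C \<noteq> []" "is_cycle st ar C"
  shows "count_list (map st C) v = count_list (map ar C) v"
proof -
  have "map ar C = map ar (butlast C) @ [ar (last C)]"
    using assms(1) by (metis append_butlast_last_id map_append list.map)
  then show ?thesis using map_st_cycle[OF assms] by (simp add: count_list_append)
qed

lemma cycle_vec_QQ:
  assumes "C \<noteq> []" "is_cycle st ar C"
  shows "cycle_vec C \<in> QQ st ar (set C)"
proof -
  have L: "real (length C) > 0" using assms by simp
  have "\<forall>v. cycle_vec C \<bullet> nb st ar v = 0"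
  proof
    fix v
    have a: "(\<Sum>e\<in>UNIV. if ar e = v then cycle_vec C $ e else 0)
      = (\<Sum>e\<in>UNIV. if ar e = v then real (count_list C e) else 0) / real (length C)"
      unfolding cycle_vec_def sum_divide_distrib by (rule sum.cong) auto
    have b: "(\<Sum>e\<in>UNIV. if st e = v then cycle_vec C $ e else 0)
      = (\<Sum>e\<in>UNIV. if st e = v then real (count_list C e) else 0) / real (length C)"
      unfolding cycle_vec_def sum_divide_distrib by (rule sum.cong) auto
    show "cycle_vec C \<bullet> nb st ar v = 0"
      unfolding inner_nb a b sum_count_if using count_st_ar[OF assms, of v]
      by (simp add: count_map)
  qed
  moreover have "cycle_vec C \<bullet> onev = 1"
    unfolding inner_onev cycle_vec_def using L
    by (simp add: sum_divide_distrib[symmetric] of_nat_sum[symmetric] sum_count_set)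
  moreover have "\<forall>e. e \<notin> set C \<longrightarrow> cycle_vec C $ e = 0"
    unfolding cycle_vec_def by (simp add: count_list_0_iff)
  ultimately show ?thesis unfolding QQ_def cycle_vec_def by simp
qed

lemma closed_walk_exists:
  fixes st ar :: "'e::finite \<Rightarrow> 'v"
  assumes "S \<noteq> {}" "\<forall>e\<in>S. \<exists>e'\<in>S. st e' = ar e"
  shows "\<exists>C. C \<noteq> [] \<and> is_cycle st ar C \<and> set C \<subseteq> S"
proof -
  obtain e0 where e0: "e0 \<in> S" using assms(1) by blast
  define nx where "nx e = (SOME e'. e' \<in> S \<and> st e' = ar e)" for e
  have nx: "nx e \<in> S \<and> st (nx e) = ar e" if "e \<in> S" for e
    unfolding nx_def by (rule someI_ex) (use assms(2) that in blast)
  define s where "s n = (nx ^^ n) e0" for n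
  have sS: "s n \<in> S" for n by (induction n) (auto simp: s_def e0 nx)
  have sstep: "st (s (Suc n)) = ar (s n)" for n using nx[OF sS[of n]] by (simp add: s_def)
  have "\<not> inj s"
  proof
    assume "inj s"
    then have "finite (UNIV::nat set)" using finite_imageD[of s UNIV] finite_subset[of "range s" "UNIV::'e set"] by simp
    then show False by simp
  qed
  then obtain i j where ij: "i \<noteq> j" "s i = s j" unfolding inj_def by blast
  then obtain i j where ij: "i < j" "s i = s j"
    by (metis linorder_neqE_nat)
  define W where "W = map s [Suc i..<Suc j]"
  have lenW: "length W = j - i" unfolding W_def using ij by (simp del: upt_Suc)
  have Wk: "W ! k = s (Suc i + k)" if "k < j - i" for k unfolding W_def using that
    by (subst nth_map_upt) auto
  have "W \<noteq> []" using ij lenW by auto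
  moreover have "is_walk st ar W"
    unfolding is_walk_def lenW using Wk sstep by (metis Suc_lessD add_Suc_right)
  moreover have "st (hd W) = ar (last W)"
  proof -
    have "hd W = s (Suc i)" using Wk[of 0] ij by (simp add: hd_conv_nth \<open>W \<noteq> []\<close>)
    moreover have "last W = s j" using Wk[of "j - i - 1"] ij lenW \<open>W \<noteq> []\<close>
      by (simp add: last_conv_nth)
    ultimately show ?thesis using sstep[of i] ij by simp
  qed
  moreover have "set W \<subseteq> S" unfolding W_def using sS by auto
  ultimately show ?thesis unfolding is_cycle_def by blast
qed

lemma simple_cycle_exists:
  fixes st ar :: "'e::finite \<Rightarrow> 'v"
  assumes "S \<noteq> {}" "\<forall>e\<in>S. \<exists>e'\<in>S. st e' = ar e"
  shows "\<exists>C. is_simple_cycle st ar C \<and> set C \<subseteq> S"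
proof -
  define P where "P n = (\<exists>C. length C = n \<and> C \<noteq> [] \<and> is_cycle st ar C \<and> set C \<subseteq> S)" for n
  have "\<exists>n. P n" using closed_walk_exists[OF assms] unfolding P_def by blast
  then obtain n where n: "P n" "\<forall>m<n. \<not> P m" using exists_least_iff[of P] by blast
  then obtain C where C: "length C = n" "C \<noteq> []" "is_cycle st ar C" "set C \<subseteq> S"
    unfolding P_def by blast
  have dist: "distinct (map ar C)"
  proof (rule ccontr)
    assume "\<not> distinct (map ar C)"
    then obtain i j where ij0: "i < length C" "j < length C" "i \<noteq> j" "ar (C!i) = ar (C!j)"
      unfolding distinct_conv_nth by auto
    then obtain i j where ij: "i < j" "j < length C" "ar (C!i) = ar (C!j)"
      by (metis linorder_neqE_nat)
    define D where "D = drop (Suc i) (take (Suc j) C)"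
    have lenD: "length D = j - i" unfolding D_def using ij by simp
    have Dk: "D ! k = C ! (Suc i + k)" if "k < j - i" for k
      unfolding D_def using that ij by simp
    have Dne: "D \<noteq> []" using lenD ij by auto
    have "is_walk st ar D"
      unfolding is_walk_def lenD
    proof (intro allI impI)
      fix k assume k: "Suc k < j - i"
      have "ar (C ! (Suc i + k)) = st (C ! Suc (Suc i + k))"
        using C(3) k ij unfolding is_cycle_def is_walk_def by auto
      then show "ar (D ! k) = st (D ! Suc k)" using Dk k by simp
    qed
    moreover have "st (hd D) = ar (last D)"
    proof -
      have "hd D = C ! (Suc i)" using Dk[of 0] ij by (simp add: hd_conv_nth Dne)
      moreover have "last D = C ! j" using Dk[of "j - i - 1"] ij lenD Dne
        by (simp add: last_conv_nth)
      moreover have "st (C ! Suc i) = ar (C ! i)"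
        using C(3) ij unfolding is_cycle_def is_walk_def by auto
      ultimately show ?thesis using ij by simp
    qed
    moreover have "set D \<subseteq> S" unfolding D_def using C(4)
      by (meson order_trans set_drop_subset set_take_subset)
    ultimately have "P (j - i)" unfolding P_def is_cycle_def using lenD Dne by blast
    moreover have "j - i < n" using ij C(1) by simp
    ultimately show False using n(2) by blast
  qed
  have "is_simple_cycle st ar C"
    unfolding is_simple_cycle_def is_path_def
    using C(2,3) dist distinct_map[of ar C] by (auto simp: is_cycle_def)
  then show ?thesis using C(4) by blast
qed

lemma QQ_mono: "F \<subseteq> G \<Longrightarrow> QQ st ar F \<subseteq> QQ st ar G"
  unfolding QQ_def by auto

lemma convex_QQ: "convex (QQ st ar F)"
  unfolding convex_def QQ_def
  by (auto simp: inner_add_left inner_scaleR_left)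

lemma count_distinct: "distinct xs \<Longrightarrow> count_list xs x = (if x \<in> set xs then 1 else 0)"
  by (induction xs) (auto simp: count_list_0_iff)

lemma QQ_out_edge:
  assumes x: "x \<in> QQ st ar F" and e: "0 < x$e"
  shows "\<exists>e'. 0 < x$e' \<and> st e' = ar e"
proof (rule ccontr)
  assume "\<not> ?thesis"
  then have a: "(\<Sum>e'\<in>UNIV. if st e' = ar e then x$e' else 0) \<le> 0"
    by (intro sum_nonpos) (auto simp: not_less)
  have "x$e \<le> (\<Sum>e'\<in>UNIV. if ar e' = ar e then x$e' else 0)"
    using member_le_sum[of e UNIV "\<lambda>e'. if ar e' = ar e then x$e' else 0"] x
    by (auto simp: QQ_def)
  moreover have "x \<bullet> nb st ar (ar e) = 0" using x by (simp add: QQ_def)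
  ultimately show False using a e unfolding inner_nb by linarith
qed

lemma QQ_supp_ne:
  assumes x: "x \<in> QQ st ar F" shows "\<exists>e. 0 < x$e"
proof (rule ccontr)
  assume "\<not> ?thesis"
  moreover have "\<forall>e. 0 \<le> x$e" using x unfolding QQ_def by simp
  ultimately have "\<forall>e. x$e = 0" by (meson antisym not_less)
  then show False using x unfolding QQ_def inner_onev by simp
qed

lemma decomp:
  fixes st ar :: "'e::finite \<Rightarrow> 'v"
  shows "x \<in> QQ st ar F \<Longrightarrow> x \<in> cycle_polytope st ar F"
proof (induction "card {e. x$e \<noteq> 0}" arbitrary: x rule: less_induct)
  case less
  note x = less.prems
  define S where "S = {e. 0 < x$e}"
  have "S \<noteq> {}" using QQ_supp_ne[OF x] unfolding S_def by blast
  moreover have "\<forall>e\<in>S. \<exists>e'\<in>S. st e' = ar e" using QQ_out_edge[OF x] unfolding S_def by blast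
  ultimately obtain C where C: "is_simple_cycle st ar C" "set C \<subseteq> S"
    using simple_cycle_exists by blast
  have Cne: "C \<noteq> []" and Ccyc: "is_cycle st ar C" and Cd: "distinct C"
    using C(1) unfolding is_simple_cycle_def is_path_def by auto
  have SF: "S \<subseteq> F" using x unfolding S_def QQ_def by force
  define L where "L = real (length C)"
  have L: "L > 0" using Cne L_def by simp
  define m where "m = Min ((\<lambda>e. x$e) ` set C)"
  have mle: "m \<le> x$e" if "e \<in> set C" for e unfolding m_def using that by simp
  have "m \<in> (\<lambda>e. x$e) ` set C" unfolding m_def using Cne by (intro Min_in) auto
  then obtain e0 where e0: "e0 \<in> set C" "x$e0 = m" by auto
  have m: "m > 0" using e0 C(2) unfolding S_def by auto
  define c where "c = cycle_vec C"
  have cQ: "c \<in> QQ st ar (set C)" using cycle_vec_QQ[OF Cne Ccyc] c_def by simp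
  have ce: "c$e = (if e \<in> set C then 1 / L else 0)" for e
    unfolding c_def cycle_vec_def L_def using count_distinct[OF Cd] by simp
  have cH: "c \<in> cycle_polytope st ar F"
    unfolding cycle_polytope_def c_def using C SF by (intro hull_inc) blast
  define lam where "lam = m * L"
  define y where "y = x - lam *\<^sub>R c"
  have ye: "y$e = x$e - (if e \<in> set C then m else 0)" for e
    unfolding y_def lam_def using ce L by simp
  have y0: "0 \<le> y$e" for e using mle x unfolding ye QQ_def by auto
  have yF: "y$e = 0" if "e \<notin> F" for e using x that C(2) SF unfolding ye QQ_def by auto
  have ynb: "y \<bullet> nb st ar v = 0" for v using x cQ unfolding y_def QQ_def
    by (simp add: inner_diff_left)
  have yone: "y \<bullet> onev = 1 - lam" using x cQ unfolding y_def QQ_def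
    by (simp add: inner_diff_left)
  have "0 \<le> y \<bullet> onev" unfolding inner_onev using y0 by (simp add: sum_nonneg)
  then have lam1: "lam \<le> 1" using yone by simp
  have lam0: "0 < lam" using m L lam_def by simp
  have supp: "{e. y$e \<noteq> 0} \<subset> {e. x$e \<noteq> 0}"
  proof
    show "{e. y$e \<noteq> 0} \<subseteq> {e. x$e \<noteq> 0}" unfolding ye using C(2) S_def by (auto split: if_splits)
    have "e0 \<notin> {e. y$e \<noteq> 0}" "e0 \<in> {e. x$e \<noteq> 0}" using e0 m unfolding ye by auto
    then show "{e. y$e \<noteq> 0} \<noteq> {e. x$e \<noteq> 0}" by blast
  qed
  then have card_lt: "card {e. y$e \<noteq> 0} < card {e. x$e \<noteq> 0}" by (simp add: psubset_card_mono)
  show ?case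
  proof (cases "lam = 1")
    case True
    then have "(\<Sum>e\<in>UNIV. y$e) = 0" using yone inner_onev[of y] by simp
    then have "\<forall>e. y$e = 0" using y0 sum_nonneg_eq_0_iff[of UNIV "\<lambda>e. y$e"] by simp
    then have "x = c" using True unfolding y_def by (simp add: vec_eq_iff)
    then show ?thesis using cH by simp
  next
    case False
    then have lam1': "lam < 1" using lam1 by simp
    define y' where "y' = (1 / (1 - lam)) *\<^sub>R y"
    have "y' \<in> QQ st ar F"
      unfolding QQ_def y'_def using y0 yF ynb yone lam1'
      by (auto simp: inner_scaleR_left)
    moreover have "{e. y'$e \<noteq> 0} = {e. y$e \<noteq> 0}" unfolding y'_def using lam1' by auto
    ultimately have "y' \<in> cycle_polytope st ar F" using less.hyps card_lt by simp
    moreover have "x = lam *\<^sub>R c + (1 - lam) *\<^sub>R y'"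
      unfolding y'_def y_def using lam1' by simp
    ultimately show ?thesis
      using cH lam0 lam1 convexD[OF convex_convex_hull, of c _ y' lam "1 - lam"]
      unfolding cycle_polytope_def by simp
  qed
qed

lemma P_char:
  fixes st ar :: "'e::finite \<Rightarrow> 'v"
  shows "cycle_polytope st ar F = QQ st ar F"
proof
  show "cycle_polytope st ar F \<subseteq> QQ st ar F"
    unfolding cycle_polytope_def
  proof (rule hull_minimal)
    show "{cycle_vec C |C. is_simple_cycle st ar C \<and> set C \<subseteq> F} \<subseteq> QQ st ar F"
    proof clarify
      fix C assume "is_simple_cycle st ar C" "set C \<subseteq> F"
      then show "cycle_vec C \<in> QQ st ar F"
        using cycle_vec_QQ[of C st ar] QQ_mono[of "set C" F]
        unfolding is_simple_cycle_def by blast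
    qed
  qed (rule convex_QQ)
  show "QQ st ar F \<subseteq> cycle_polytope st ar F" using decomp by blast
qed



lemma restr_QQ: "restr_face (QQ st ar UNIV) F = QQ st ar F"
  unfolding restr_face_def QQ_def by auto

lemma full_QQ_pos:
  assumes "is_full st ar F" "e \<in> F"
  shows "\<exists>x\<in>QQ st ar F. 0 < x$e"
proof -
  obtain C where C: "is_cycle st ar C" "set C \<subseteq> F" "e \<in> set C"
    using assms unfolding is_full_def by blast
  then have Cne: "C \<noteq> []" by auto
  have "cycle_vec C \<in> QQ st ar F" using cycle_vec_QQ[OF Cne C(1)] QQ_mono[OF C(2)] by blast
  moreover have "0 < cycle_vec C $ e"
  proof -
    have "count_list C e \<noteq> 0" using C(3) count_list_0_iff by metis
    then show ?thesis unfolding cycle_vec_def using Cne by (simp add: divide_pos_pos)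
  qed
  ultimately show ?thesis by blast
qed

lemma pos_combine:
  fixes S :: "(real^'e::finite) set"
  assumes "convex S" "\<forall>x\<in>S. \<forall>e. 0 \<le> x$e" "finite G" "S \<noteq> {}" "\<forall>e\<in>G. \<exists>x\<in>S. 0 < x$e"
  shows "\<exists>x\<in>S. \<forall>e\<in>G. 0 < x$e"
  using assms(3,5)
proof (induction G rule: finite_induct)
  case empty then show ?case using assms(4) by auto
next
  case (insert a G)
  then obtain x where x: "x \<in> S" "\<forall>e\<in>G. 0 < x$e" by auto
  obtain z where z: "z \<in> S" "0 < z$a" using insert.prems by auto
  let ?w = "(1/2) *\<^sub>R x + (1/2) *\<^sub>R z"
  have "?w \<in> S" using convexD[OF assms(1) x(1) z(1), of "1/2" "1/2"] by simp
  moreover have "\<forall>e\<in>insert a G. 0 < ?w$e"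
  proof
    fix e assume "e \<in> insert a G"
    have "0 \<le> x$e" "0 \<le> z$e" using x(1) z(1) assms(2) by auto
    moreover have "0 < x$e \<or> 0 < z$e" using \<open>e \<in> insert a G\<close> x(2) z(2) by auto
    ultimately show "0 < ?w$e" by auto
  qed
  ultimately show ?case by blast
qed

lemma eps_exists:
  fixes xb d :: "real^'e::finite"
  assumes "\<forall>e. 0 < xb$e \<or> d$e = 0" "\<forall>e. 0 \<le> xb$e"
  shows "\<exists>\<epsilon>>0. \<forall>e. 0 \<le> xb$e + \<epsilon> * d$e"
proof -
  define A where "A = insert 1 ((\<lambda>e. xb$e / (\<bar>d$e\<bar> + 1)) ` {e. 0 < xb$e})"
  define \<epsilon> where "\<epsilon> = Min A"
  have fA: "finite A" "A \<noteq> {}" unfolding A_def by auto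
  have "\<forall>a\<in>A. 0 < a" unfolding A_def by auto
  then have ep: "0 < \<epsilon>" unfolding \<epsilon>_def using fA by simp
  have "0 \<le> xb$e + \<epsilon> * d$e" for e
  proof (cases "0 < xb$e")
    case True
    then have "\<epsilon> \<le> xb$e / (\<bar>d$e\<bar> + 1)" unfolding \<epsilon>_def using fA unfolding A_def by simp
    then have "\<epsilon> * (\<bar>d$e\<bar> + 1) \<le> xb$e" by (simp add: pos_le_divide_eq)
    moreover have "- (\<epsilon> * \<bar>d$e\<bar>) \<le> \<epsilon> * d$e"
    proof -
      have "- \<bar>d$e\<bar> \<le> d$e" by (cases "d$e \<ge> 0") auto
      from mult_left_mono[OF this, of \<epsilon>] ep show ?thesis by simp
    qed
    ultimately show ?thesis using ep by (simp add: algebra_simps)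
  next
    case False
    then show ?thesis using assms by auto
  qed
  then show ?thesis using ep by blast
qed

lemma order_part:
  assumes "is_full st ar F1" "QQ st ar F1 \<subseteq> QQ st ar F2"
  shows "F1 \<subseteq> F2"
proof
  fix e assume "e \<in> F1"
  then obtain x where "x \<in> QQ st ar F1" "0 < x$e" using full_QQ_pos assms(1) by blast
  then have x2: "x \<in> QQ st ar F2" "0 < x$e" using assms(2) by auto
  show "e \<in> F2"
  proof (rule ccontr)
    assume "e \<notin> F2"
    then have "x$e = 0" using x2(1) unfolding QQ_def by simp
    then show False using x2(2) by simp
  qed
qed

lemma QQ_ne:
  assumes "is_full st ar F" "F \<noteq> {}"
  shows "QQ st ar F \<noteq> {}"
  using full_QQ_pos[OF assms(1)] assms(2) by blast

lemma face_of_full: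
  fixes st ar :: "'e::finite \<Rightarrow> 'v"
  assumes "is_full st ar F" "F \<noteq> {}"
  shows "is_face (QQ st ar UNIV) (QQ st ar F)"
proof -
  define w :: "real^'e" where "w = (\<chi> e. if e \<in> F then 0 else 1)"
  have lin: "linear (\<lambda>x. x \<bullet> w)" by (simp add: bounded_linear.linear bounded_linear_inner_left)
  have wnn: "0 \<le> y \<bullet> w" if "y \<in> QQ st ar UNIV" for y
    using that unfolding QQ_def w_def inner_vec_def by (auto intro!: sum_nonneg)
  have w0: "x \<bullet> w = 0" if "x \<in> QQ st ar F" for x
    using that unfolding QQ_def w_def inner_vec_def by (auto intro!: sum.neutral)
  obtain x0 where x0: "x0 \<in> QQ st ar F" using QQ_ne[OF assms] by blast
  have "QQ st ar F = {x \<in> QQ st ar UNIV. \<forall>y\<in>QQ st ar UNIV. x \<bullet> w \<le> y \<bullet> w}"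
  proof safe
    fix x assume x: "x \<in> QQ st ar F"
    show "x \<in> QQ st ar UNIV" using x QQ_mono[of F UNIV] by blast
    fix y assume "y \<in> QQ st ar UNIV" then show "x \<bullet> w \<le> y \<bullet> w" using w0[OF x] wnn by simp
  next
    fix x assume x: "x \<in> QQ st ar UNIV" "\<forall>y\<in>QQ st ar UNIV. x \<bullet> w \<le> y \<bullet> w"
    have "x \<bullet> w \<le> 0" using x(2) x0 w0[OF x0] QQ_mono[of F UNIV] by force
    then have s0: "(\<Sum>e\<in>UNIV. x$e * w$e) = 0" using wnn[OF x(1)] unfolding inner_vec_def by simp
    have "\<forall>e\<in>UNIV. 0 \<le> x$e * w$e" using x(1) unfolding QQ_def w_def by simp
    then have "\<forall>e. x$e * w$e = 0" using sum_nonneg_eq_0_iff[of UNIV "\<lambda>e. x$e * w$e"] s0 by simp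
    then have "\<forall>e. e \<notin> F \<longrightarrow> x$e = 0" unfolding w_def by force
    then show "x \<in> QQ st ar F" using x(1) unfolding QQ_def by simp
  qed
  then show ?thesis unfolding is_face_def using QQ_ne[OF assms] lin by blast
qed



lemma face_surj:
  fixes st ar :: "'e::finite \<Rightarrow> 'v"
  assumes "is_face (QQ st ar UNIV) S"
  shows "\<exists>F. F \<noteq> {} \<and> is_full st ar F \<and> S = QQ st ar F"
proof -
  define P where "P = QQ st ar UNIV"
  obtain f :: "real^'e \<Rightarrow> real" where f: "linear f" "S = {x\<in>P. \<forall>y\<in>P. f x \<le> f y}" and Sne: "S \<noteq> {}"
    using assms unfolding is_face_def P_def by blast
  define F where "F = {e. \<exists>x\<in>S. x$e \<noteq> 0}"
  have SP: "S \<subseteq> P" using f(2) by blast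
  have Snn: "\<forall>x\<in>S. \<forall>e. 0 \<le> x$e" using SP unfolding P_def QQ_def by blast
  have cS: "convex S"
    unfolding convex_def
  proof (intro ballI allI impI)
    fix x y u v assume xy: "x \<in> S" "y \<in> S" and uv: "0 \<le> (u::real)" "0 \<le> v" "u + v = 1"
    have "u *\<^sub>R x + v *\<^sub>R y \<in> P" using convexD[OF convex_QQ, of x st ar UNIV y u v] xy uv SP
      unfolding P_def by blast
    moreover have "f (u *\<^sub>R x + v *\<^sub>R y) \<le> f z" if "z \<in> P" for z
    proof -
      have "f x \<le> f z" "f y \<le> f z" using xy that f(2) by auto
      then have "u * f x + v * f y \<le> u * f z + v * f z"
        using uv by (simp add: add_mono mult_left_mono)
      moreover have "u * f z + v * f z = f z" using uv(3) by (metis distrib_right mult_1)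
      ultimately show ?thesis using uv f(1) by (simp add: linear_add linear_scale)
    qed
    ultimately show "u *\<^sub>R x + v *\<^sub>R y \<in> S" using f(2) by blast
  qed
  have Fpos: "\<forall>e\<in>F. \<exists>x\<in>S. 0 < x$e"
  proof
    fix e assume "e \<in> F"
    then obtain x where x: "x \<in> S" "x$e \<noteq> 0" unfolding F_def by blast
    then have "0 \<le> x$e" using Snn by blast
    then have "0 < x$e" using x(2) by linarith
    then show "\<exists>x\<in>S. 0 < x$e" using x(1) by blast
  qed
  then obtain xb where xb: "xb \<in> S" "\<forall>e\<in>F. 0 < xb$e"
    using pos_combine[OF cS Snn finite Sne Fpos] by blast
  have SQ: "S \<subseteq> QQ st ar F"
  proof
    fix x assume x: "x \<in> S"
    then have "x \<in> P" using SP by blast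
    moreover have "\<forall>e. e \<notin> F \<longrightarrow> x$e = 0" using x unfolding F_def by blast
    ultimately show "x \<in> QQ st ar F" unfolding P_def QQ_def by blast
  qed
  have QS: "QQ st ar F \<subseteq> S"
  proof
    fix y assume y: "y \<in> QQ st ar F"
    have xbQ: "xb \<in> QQ st ar F" using xb SQ by blast
    have "\<forall>e. 0 < xb$e \<or> (xb - y)$e = 0"
    proof
      fix e show "0 < xb$e \<or> (xb - y)$e = 0"
        using xb(2) xbQ y unfolding QQ_def by (cases "e \<in> F") auto
    qed
    moreover have "\<forall>e. 0 \<le> xb$e" using xbQ unfolding QQ_def by blast
    ultimately obtain \<epsilon> where ep: "\<epsilon> > 0" "\<forall>e. 0 \<le> xb$e + \<epsilon> * (xb - y)$e"
      using eps_exists by blast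
    define z where "z = xb + \<epsilon> *\<^sub>R (xb - y)"
    have "z \<in> P"
    proof -
      have "\<forall>e. 0 \<le> z$e" using ep(2) unfolding z_def by simp
      moreover have "\<forall>v. z \<bullet> nb st ar v = 0" using xbQ y unfolding z_def QQ_def
        by (simp add: inner_add_left inner_diff_left inner_scaleR_left)
      moreover have "z \<bullet> onev = 1" using xbQ y unfolding z_def QQ_def
        by (simp add: inner_add_left inner_diff_left inner_scaleR_left)
      ultimately show ?thesis unfolding P_def QQ_def by blast
    qed
    then have "f xb \<le> f z" using xb(1) f(2) by blast
    moreover have "f z = f xb + \<epsilon> * (f xb - f y)" unfolding z_def
      using f(1) by (simp add: linear_add linear_scale linear_diff)
    ultimately have "0 \<le> \<epsilon> * (f xb - f y)" by linarith
    then have "0 \<le> f xb - f y" using ep(1) by (simp add: zero_le_mult_iff)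
    then have "f y \<le> f xb" by linarith
    moreover have "y \<in> P" using y QQ_mono[of F UNIV] unfolding P_def by blast
    moreover have "\<forall>w\<in>P. f xb \<le> f w" using xb(1) f(2) by blast
    ultimately have "y \<in> P \<and> (\<forall>w\<in>P. f y \<le> f w)" by fastforce
    then show "y \<in> S" using f(2) by blast
  qed
  have "F \<noteq> {}"
  proof -
    obtain x where "x \<in> S" using Sne by blast
    then obtain e where "0 < x$e" using QQ_supp_ne SP unfolding P_def by blast
    then show ?thesis using \<open>x \<in> S\<close> unfolding F_def by force
  qed
  moreover have "is_full st ar F"
    unfolding is_full_def
  proof
    fix e assume "e \<in> F"
    then obtain x where x: "x \<in> S" "x$e \<noteq> 0" unfolding F_def by blast
    define G where "G = {e. x$e \<noteq> 0}"
    have GF: "G \<subseteq> F" unfolding G_def F_def using x by blast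
    have "x \<in> QQ st ar G" using x SP unfolding G_def P_def QQ_def by auto
    then have xH: "x \<in> cycle_polytope st ar G" using P_char by blast
    show "\<exists>C. is_cycle st ar C \<and> set C \<subseteq> F \<and> e \<in> set C"
    proof (rule ccontr)
      assume no: "\<not> ?thesis"
      have "{cycle_vec C |C. is_simple_cycle st ar C \<and> set C \<subseteq> G} \<subseteq> {y. y$e = 0}"
      proof clarify
        fix C assume C: "is_simple_cycle st ar C" "set C \<subseteq> G"
        then have "e \<notin> set C" using no GF unfolding is_simple_cycle_def by blast
        then show "cycle_vec C $ e = 0" unfolding cycle_vec_def by (simp add: count_list_0_iff)
      qed
      moreover have "convex {y::real^'e. y$e = 0}" unfolding convex_def by simp
      ultimately have "cycle_polytope st ar G \<subseteq> {y. y$e = 0}"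
        unfolding cycle_polytope_def by (rule hull_minimal)
      then show False using xH x(2) by blast
    qed
  qed
  ultimately show ?thesis using SQ QS by blast
qed



definition Wsp :: "'e set \<Rightarrow> (real^'e::finite) set" where
  "Wsp F = {x. \<forall>e. e \<notin> F \<longrightarrow> x$e = 0}"

definition bF :: "('e::finite \<Rightarrow> 'v) \<Rightarrow> ('e \<Rightarrow> 'v) \<Rightarrow> 'e set \<Rightarrow> 'v \<Rightarrow> real^'e" where
  "bF st ar F v = (\<chi> e. if e \<in> F then nb st ar v $ e else 0)"

lemma subspace_Wsp: "subspace (Wsp F)"
  unfolding subspace_def Wsp_def by auto

lemma dim_Wsp: "dim (Wsp (F::'e::finite set)) = card F"
proof -
  define d :: "(real^'e) set" where "d = (\<lambda>e. axis e 1) ` F"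
  have dB: "d \<subseteq> Basis" unfolding d_def Basis_vec_def by auto
  have "Wsp F = {x. \<forall>i\<in>Basis. i \<notin> d \<longrightarrow> x \<bullet> i = 0}"
  proof safe
    fix x :: "real^'e" and i :: "real^'e" assume x: "x \<in> Wsp F" and i: "i \<in> Basis" "i \<notin> d"
    obtain e where e: "i = axis e 1" using axis_inverse[OF i(1)] by blast
    then have "e \<notin> F" using i(2) unfolding d_def by auto
    then show "x \<bullet> i = 0" using x e unfolding Wsp_def by (simp add: inner_axis)
  next
    fix x :: "real^'e" assume x: "\<forall>i\<in>Basis. i \<notin> d \<longrightarrow> x \<bullet> i = 0"
    show "x \<in> Wsp F" unfolding Wsp_def mem_Collect_eq
    proof (intro allI impI)
      fix e assume "e \<notin> F"
      then have "axis e (1::real) \<notin> d" unfolding d_def by (auto simp: axis_eq_axis)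
      moreover have "axis e (1::real) \<in> Basis" by simp
      ultimately have "x \<bullet> axis e 1 = 0" using x by blast
      then show "x$e = 0" by (simp add: inner_axis)
    qed
  qed
  moreover have "card d = card F" unfolding d_def
    by (rule card_image) (auto simp: inj_on_def axis_eq_axis)
  ultimately show ?thesis using dim_substandard[OF dB] by simp
qed

lemma inner_bF: "y \<in> Wsp F \<Longrightarrow> y \<bullet> bF st ar F v = y \<bullet> nb st ar v"
  unfolding Wsp_def bF_def inner_vec_def by (intro sum.cong) auto

lemma nb_zero: "\<forall>e. st e \<in> V \<and> ar e \<in> V \<Longrightarrow> v \<notin> V \<Longrightarrow> nb st ar v = 0"
  unfolding nb_def by (auto simp: vec_eq_iff)

lemma bF_W: "bF st ar F v \<in> Wsp F"
  unfolding bF_def Wsp_def by simp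



definition Ed :: "('e \<Rightarrow> 'v) \<Rightarrow> ('e \<Rightarrow> 'v) \<Rightarrow> 'e set \<Rightarrow> ('v \<times> 'v) set" where
  "Ed st ar F = {(st e, ar e) | e. e \<in> F} \<union> {(ar e, st e) | e. e \<in> F}"

lemma conn_rel_Ed: "conn_rel V st ar F = {(u,v). u \<in> V \<and> v \<in> V \<and> (u,v) \<in> (Ed st ar F)\<^sup>*}"
  unfolding conn_rel_def Ed_def by simp

lemma equiv_conn: "equiv V (conn_rel V st ar F)"
proof -
  have s: "sym ((Ed st ar F)\<^sup>*)" by (rule sym_rtrancl) (auto simp: sym_def Ed_def)
  show ?thesis unfolding equiv_def refl_on_def sym_def trans_def conn_rel_Ed
    using s rtrancl_trans[of _ _ "Ed st ar F"] unfolding sym_def by blast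
qed

lemma const_on_Ed:
  assumes "\<forall>e\<in>F. p (ar e) = p (st e)" "(u, w) \<in> (Ed st ar F)\<^sup>*"
  shows "p u = p w"
  using assms(2)
proof (induction rule: rtrancl_induct)
  case base then show ?case by simp
next
  case (step y z) then show ?case using assms(1) unfolding Ed_def by auto
qed

lemma sum_ind: "finite A \<Longrightarrow> (\<Sum>v\<in>A. p v * (if a = v then 1 else 0)) = (if a \<in> A then p a else (0::real))"
  by (simp add: if_distrib[of "\<lambda>x. _ * x"] sum.delta cong: if_cong)

lemma bF_e: "e \<in> F \<Longrightarrow> bF st ar F v $ e = (if ar e = v then 1 else 0) - (if st e = v then 1 else 0)"
  unfolding bF_def nb_def by simp

lemma dim_span_B:
  fixes st ar :: "'e::finite \<Rightarrow> 'v"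
  assumes V: "finite V" "\<forall>e. st e \<in> V \<and> ar e \<in> V"
  shows "dim (span (bF st ar F ` V)) = card V - num_components V st ar F
       \<and> num_components V st ar F \<le> card V"
proof -
  define R where "R = conn_rel V st ar F"
  have eq: "equiv V R" unfolding R_def by (rule equiv_conn)
  define rep where "rep X = (SOME v. v \<in> X)" for X :: "'v set"
  have repX: "rep X \<in> X" if "X \<in> V // R" for X
    unfolding rep_def using in_quotient_imp_non_empty[OF eq that] by (simp add: some_in_eq)
  define reps where "reps = rep ` (V // R)"
  have injrep: "inj_on rep (V // R)"
  proof (rule inj_onI)
    fix X Y assume XY: "X \<in> V // R" "Y \<in> V // R" "rep X = rep Y"
    then have "rep X \<in> X \<inter> Y" using repX[OF XY(1)] repX[OF XY(2)] by simp
    then show "X = Y" using quotient_disj[OF eq XY(1,2)] by blast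
  qed
  have repsV: "reps \<subseteq> V" unfolding reps_def using repX in_quotient_imp_subset[OF eq] by blast
  have fQ: "finite (V // R)" using V(1) by (simp add: finite_quotient[OF V(1)] eq equiv_type)
  have card_reps: "card reps = num_components V st ar F"
    unfolding reps_def num_components_def R_def[symmetric] using card_image[OF injrep] by simp
  have rep_uniq: "r = rep K" if as: "r \<in> reps" "r \<in> K" "K \<in> V // R" for r K
  proof -
    obtain X where X: "X \<in> V // R" "r = rep X" using as(1) unfolding reps_def by blast
    then have "r \<in> X \<inter> K" using repX[OF X(1)] as(2) by auto
    then have "X = K" using quotient_disj[OF eq X(1) as(3)] by blast
    then show ?thesis using X by simp
  qed
  have vrep: "(v, rep (R``{v})) \<in> R" if "v \<in> V" for v
    using repX[OF quotientI[OF that]] by simp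
  define A where "A = V - reps"
  have fA: "finite A" unfolding A_def using V(1) by simp
  have key: "\<forall>v\<in>A. p v = 0" if sp: "(\<Sum>v\<in>A. p v *\<^sub>R bF st ar F v) = 0" for p
  proof -
    define p' where "p' v = (if v \<in> A then p v else 0)" for v
    have "\<forall>e\<in>F. p' (ar e) = p' (st e)"
    proof
      fix e assume e: "e \<in> F"
      have "0 = (\<Sum>v\<in>A. p v * bF st ar F v $ e)" using arg_cong[OF sp, of "\<lambda>x. x $ e"] by simp
      also have "\<dots> = (\<Sum>v\<in>A. p v * (if ar e = v then 1 else 0)) - (\<Sum>v\<in>A. p v * (if st e = v then 1 else 0))"
        unfolding bF_e[OF e] by (simp add: right_diff_distrib sum_subtractf)
      also have "\<dots> = p' (ar e) - p' (st e)" unfolding sum_ind[OF fA] p'_def by simp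
      finally show "p' (ar e) = p' (st e)" by simp
    qed
    show ?thesis
    proof
      fix v assume v: "v \<in> A"
      then have vV: "v \<in> V" unfolding A_def by simp
      obtain r where r: "r = rep (R``{v})" by simp
      have "(v, r) \<in> R" using vrep[OF vV] r by simp
      then have "(v, r) \<in> (Ed st ar F)\<^sup>*" unfolding R_def conn_rel_Ed by blast
      then have "(v, rep (R``{v})) \<in> (Ed st ar F)\<^sup>*" using r by simp
      then have "p' v = p' (rep (R``{v}))" using const_on_Ed \<open>\<forall>e\<in>F. p' (ar e) = p' (st e)\<close> by metis
      moreover have "rep (R``{v}) \<in> reps" unfolding reps_def using quotientI[OF vV] by blast
      ultimately have "p' v = 0" unfolding p'_def A_def by simp
      then show "p v = 0" using v unfolding p'_def by simp
    qed
  qed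
  have injb: "inj_on (bF st ar F) A"
  proof (rule inj_onI, rule ccontr)
    fix u w assume uw: "u \<in> A" "w \<in> A" "bF st ar F u = bF st ar F w" "u \<noteq> w"
    define p where "p v = (if v = u then 1 else if v = w then -1 else (0::real))" for v
    have "(\<Sum>v\<in>A. p v *\<^sub>R bF st ar F v) = (\<Sum>v\<in>A. (if v = u then bF st ar F u else 0) - (if v = w then bF st ar F w else 0))"
      by (rule sum.cong) (auto simp: p_def uw(4))
    also have "\<dots> = bF st ar F u - bF st ar F w" using uw fA by (simp add: sum_subtractf)
    finally have "(\<Sum>v\<in>A. p v *\<^sub>R bF st ar F v) = 0" using uw(3) by simp
    then have "p u = 0" using key uw(1) by blast
    then show False unfolding p_def by simp
  qed
  have indep: "independent (bF st ar F ` A)"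
  proof (rule independent_if_scalars_zero)
    show "finite (bF st ar F ` A)" using fA by simp
  next
    fix f x assume s: "(\<Sum>x\<in>bF st ar F ` A. f x *\<^sub>R x) = 0" and x: "x \<in> bF st ar F ` A"
    have "(\<Sum>v\<in>A. (f \<circ> bF st ar F) v *\<^sub>R bF st ar F v) = 0"
      using s sum.reindex[OF injb, of "\<lambda>x. f x *\<^sub>R x"] by simp
    then have "\<forall>v\<in>A. (f \<circ> bF st ar F) v = 0" by (rule key)
    then show "f x = 0" using x by auto
  qed
  have spaneq: "span (bF st ar F ` V) = span (bF st ar F ` A)"
  proof
    show "span (bF st ar F ` A) \<subseteq> span (bF st ar F ` V)" unfolding A_def by (intro span_mono) auto
    have "bF st ar F ` V \<subseteq> span (bF st ar F ` A)"
    proof clarify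
      fix v assume vV: "v \<in> V"
      show "bF st ar F v \<in> span (bF st ar F ` A)"
      proof (cases "v \<in> reps")
        case False then show ?thesis using vV unfolding A_def by (intro span_base) auto
      next
        case True
        define K where "K = R``{v}"
        have KQ: "K \<in> V // R" unfolding K_def using quotientI[OF vV] .
        have KV: "K \<subseteq> V" using in_quotient_imp_subset[OF eq KQ] .
        then have fK: "finite K" using V(1) finite_subset by blast
        have "(v, v) \<in> R" using eq vV unfolding equiv_def refl_on_def by blast
        then have vK: "v \<in> K" unfolding K_def by simp
        have stK: "st e \<in> K \<longleftrightarrow> ar e \<in> K" if "e \<in> F" for e
        proof -
          have "(st e, ar e) \<in> Ed st ar F" unfolding Ed_def using that by blast
          then have "(st e, ar e) \<in> R" unfolding R_def conn_rel_Ed using V(2) by blast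
          then show ?thesis unfolding K_def using eq unfolding equiv_def sym_def trans_def by blast
        qed
        have sK: "(\<Sum>u\<in>K. bF st ar F u) = 0"
          unfolding vec_eq_iff
        proof
          fix e
          show "(\<Sum>u\<in>K. bF st ar F u) $ e = 0 $ e"
          proof (cases "e \<in> F")
            case False then show ?thesis unfolding bF_def by simp
          next
            case True
            have "(\<Sum>u\<in>K. bF st ar F u) $ e = (\<Sum>u\<in>K. 1 * (if ar e = u then 1 else 0)) - (\<Sum>u\<in>K. 1 * (if st e = u then 1 else 0))"
              unfolding sum_component bF_e[OF True] by (simp add: sum_subtractf)
            also have "\<dots> = 0" unfolding sum_ind[OF fK] using stK[OF True] by simp
            finally show ?thesis by simp
          qed
        qed
        have "bF st ar F v = - (\<Sum>u\<in>K - {v}. bF st ar F u)"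
          using sK sum.remove[OF fK vK, of "bF st ar F"] by (simp add: eq_neg_iff_add_eq_0)
        moreover have "K - {v} \<subseteq> A"
        proof
          fix u assume u: "u \<in> K - {v}"
          have "u \<notin> reps"
          proof
            assume "u \<in> reps"
            then have "u = rep K" using rep_uniq u KQ by blast
            moreover have "v = rep K" using rep_uniq True vK KQ by blast
            ultimately show False using u by simp
          qed
          then show "u \<in> A" unfolding A_def using u KV by blast
        qed
        ultimately show ?thesis
          by (metis (no_types, lifting) image_eqI span_base span_neg span_sum subsetD)
      qed
    qed
    then show "span (bF st ar F ` V) \<subseteq> span (bF st ar F ` A)"
      using span_mono span_span by blast
  qed
  have "dim (span (bF st ar F ` V)) = card A"
    unfolding spaneq dim_span dim_eq_card_independent[OF indep] card_image[OF injb] ..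
  moreover have "card A = card V - card reps" unfolding A_def using repsV V(1) by (simp add: card_Diff_subset finite_subset)
  moreover have "card reps \<le> card V" using repsV V(1) by (simp add: card_mono)
  ultimately show ?thesis using card_reps by simp
qed



definition Circ :: "('e::finite \<Rightarrow> 'v) \<Rightarrow> ('e \<Rightarrow> 'v) \<Rightarrow> 'e set \<Rightarrow> (real^'e) set" where
  "Circ st ar F = {x. (\<forall>e. e \<notin> F \<longrightarrow> x$e = 0) \<and> (\<forall>v. x \<bullet> nb st ar v = 0)}"

lemma subspace_Circ: "subspace (Circ st ar F)"
  unfolding subspace_def Circ_def by (auto simp: inner_add_left inner_scaleR_left)

lemma dim_Circ:
  fixes st ar :: "'e::finite \<Rightarrow> 'v"
  assumes V: "finite V" "\<forall>e. st e \<in> V \<and> ar e \<in> V"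
  shows "int (dim (Circ st ar F)) = int (card F) - int (card V) + int (num_components V st ar F)"
proof -
  define B where "B = bF st ar F ` V"
  have BW: "span B \<subseteq> Wsp F" unfolding B_def using bF_W subspace_Wsp by (intro span_minimal) auto
  have CE: "Circ st ar F = {y \<in> Wsp F. \<forall>x\<in>span B. orthogonal x y}"
  proof safe
    fix y assume y: "y \<in> Circ st ar F"
    then show yW: "y \<in> Wsp F" unfolding Circ_def Wsp_def by simp
    fix x assume x: "x \<in> span B"
    have "orthogonal y x"
    proof (rule orthogonal_to_span[OF x])
      fix b assume "b \<in> B"
      then obtain v where "b = bF st ar F v" unfolding B_def by blast
      moreover have "y \<bullet> nb st ar v = 0" using y unfolding Circ_def by simp
      ultimately show "orthogonal y b" unfolding orthogonal_def using inner_bF[OF yW, of st ar v] by simp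
    qed
    then show "orthogonal x y" by (simp add: orthogonal_commute)
  next
    fix y assume yW: "y \<in> Wsp F" and o: "\<forall>x\<in>span B. orthogonal x y"
    have "y \<bullet> nb st ar v = 0" for v
    proof (cases "v \<in> V")
      case True
      then have "bF st ar F v \<in> span B" unfolding B_def by (intro span_base) auto
      then have "orthogonal (bF st ar F v) y" using o by blast
      then have "y \<bullet> bF st ar F v = 0" unfolding orthogonal_def by (simp add: inner_commute)
      then show ?thesis using inner_bF[OF yW, of st ar v] by simp
    next
      case False then show ?thesis using nb_zero[OF V(2)] by simp
    qed
    then show "y \<in> Circ st ar F" using yW unfolding Circ_def Wsp_def by simp
  qed
  have "dim (Circ st ar F) + dim (span B) = dim (Wsp F)"
    unfolding CE by (rule dim_subspace_orthogonal_to_vectors[OF subspace_span subspace_Wsp BW])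
  then have "dim (Circ st ar F) + dim (span B) = card F" using dim_Wsp by simp
  moreover have "dim (span B) = card V - num_components V st ar F"
       "num_components V st ar F \<le> card V" using dim_span_B[OF V, of F] unfolding B_def by auto
  ultimately show ?thesis by linarith
qed

lemma aff_QQ:
  fixes st ar :: "'e::finite \<Rightarrow> 'v"
  assumes full: "is_full st ar F" "F \<noteq> {}"
  shows "aff_dim (QQ st ar F) = int (dim (Circ st ar F)) - 1"
proof -
  have nn: "\<forall>x\<in>QQ st ar F. \<forall>e. 0 \<le> x$e" unfolding QQ_def by blast
  obtain xb where xb: "xb \<in> QQ st ar F" "\<forall>e\<in>F. 0 < xb$e"
    using pos_combine[OF convex_QQ nn finite QQ_ne[OF full]] full_QQ_pos[OF full(1)] by blast
  define T where "T = (+) (- xb) ` QQ st ar F"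
  define C0 where "C0 = {y \<in> Circ st ar F. y \<bullet> onev = 0}"
  have sC0: "subspace C0" unfolding C0_def subspace_def Circ_def
    by (auto simp: inner_add_left inner_scaleR_left)
  have xbC: "xb \<in> Circ st ar F" using xb(1) unfolding QQ_def Circ_def by simp
  have "aff_dim (QQ st ar F) = int (dim T)"
    unfolding T_def by (rule aff_dim_eq_dim) (rule hull_inc[OF xb(1)])
  moreover have "span T = C0"
  proof
    have "T \<subseteq> C0"
    proof
      fix t assume "t \<in> T"
      then obtain x where x: "x \<in> QQ st ar F" "t = - xb + x" unfolding T_def by blast
      then show "t \<in> C0" using xb(1) unfolding C0_def Circ_def QQ_def
        by (simp add: inner_add_left inner_diff_left)
    qed
    then show "span T \<subseteq> C0" using sC0 by (rule span_minimal)
  next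
    show "C0 \<subseteq> span T"
    proof
      fix y assume y: "y \<in> C0"
      have "\<forall>e. 0 < xb$e \<or> y$e = 0" using xb(2) y unfolding C0_def Circ_def by auto
      moreover have "\<forall>e. 0 \<le> xb$e" using xb(1) nn by blast
      ultimately obtain \<epsilon> where ep: "\<epsilon> > 0" "\<forall>e. 0 \<le> xb$e + \<epsilon> * y$e"
        using eps_exists by blast
      define x where "x = xb + \<epsilon> *\<^sub>R y"
      have "x \<in> QQ st ar F"
      proof -
        have "\<forall>e. 0 \<le> x$e" using ep(2) unfolding x_def by simp
        moreover have "\<forall>e. e \<notin> F \<longrightarrow> x$e = 0" using xb(1) y unfolding x_def QQ_def C0_def Circ_def by simp
        moreover have "\<forall>v. x \<bullet> nb st ar v = 0" using xb(1) y unfolding x_def QQ_def C0_def Circ_def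
          by (simp add: inner_add_left inner_scaleR_left)
        moreover have "x \<bullet> onev = 1" using xb(1) y unfolding x_def QQ_def C0_def Circ_def
          by (simp add: inner_add_left inner_scaleR_left)
        ultimately show ?thesis unfolding QQ_def by blast
      qed
      then have "\<epsilon> *\<^sub>R y \<in> T" unfolding T_def x_def by force
      then have "(1/\<epsilon>) *\<^sub>R (\<epsilon> *\<^sub>R y) \<in> span T" by (intro span_mul span_base)
      then show "y \<in> span T" using ep(1) by simp
    qed
  qed
  then have "dim T = dim C0" using dim_span[of T] by simp
  moreover have "dim (Circ st ar F) = dim C0 + 1"
  proof -
    have "span C0 = C0" using sC0 by (simp add: span_eq_iff)
    moreover have "xb \<notin> C0" using xb(1) unfolding C0_def QQ_def by auto
    ultimately have "xb \<notin> span C0" by metis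
    then have "dim (insert xb C0) = dim C0 + 1" by (simp add: dim_insert)
    moreover have "span (insert xb C0) = Circ st ar F"
    proof
      show "span (insert xb C0) \<subseteq> Circ st ar F"
        using xbC subspace_Circ unfolding C0_def by (intro span_minimal) auto
      show "Circ st ar F \<subseteq> span (insert xb C0)"
      proof
        fix y assume y: "y \<in> Circ st ar F"
        define z where "z = y - (y \<bullet> onev) *\<^sub>R xb"
        have "z \<in> Circ st ar F" unfolding z_def
          using subspace_diff[OF subspace_Circ y subspace_scale[OF subspace_Circ xbC]] .
        moreover have "z \<bullet> onev = 0" unfolding z_def using xb(1)
          by (simp add: inner_diff_left inner_scaleR_left QQ_def)
        ultimately have "z \<in> C0" unfolding C0_def by blast
        then have "z \<in> span (insert xb C0)" by (intro span_base) auto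
        moreover have "(y \<bullet> onev) *\<^sub>R xb \<in> span (insert xb C0)" by (intro span_mul span_base) auto
        ultimately have "z + (y \<bullet> onev) *\<^sub>R xb \<in> span (insert xb C0)" by (rule span_add)
        then show "y \<in> span (insert xb C0)" unfolding z_def by simp
      qed
    qed
    ultimately show ?thesis using dim_span[of "insert xb C0"] by simp
  qed
  ultimately show ?thesis by simp
qed

theorem mainTheorem6:
  fixes V :: "'v set" and st ar :: "'e::finite \<Rightarrow> 'v"
  assumes "finite V" and "\<forall>e. st e \<in> V \<and> ar e \<in> V"
  shows "bij_betw (\<lambda>F. restr_face (cycle_polytope st ar UNIV) F)
           {F. F \<noteq> {} \<and> is_full st ar F}
           {S. is_face (cycle_polytope st ar UNIV) S}
       \<and> (\<forall>F1 F2. F1 \<noteq> {} \<and> is_full st ar F1 \<and> F2 \<noteq> {} \<and> is_full st ar F2 \<longrightarrow>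
            (F1 \<subseteq> F2 \<longleftrightarrow> restr_face (cycle_polytope st ar UNIV) F1
                          \<subseteq> restr_face (cycle_polytope st ar UNIV) F2))
       \<and> (\<forall>F. F \<noteq> {} \<and> is_full st ar F \<longrightarrow>
            cycle_polytope st ar F = restr_face (cycle_polytope st ar UNIV) F \<and>
            aff_dim (restr_face (cycle_polytope st ar UNIV) F)
              = int (card F) - int (card V) + int (num_components V st ar F) - 1)"
proof -
  have fe: "(\<lambda>F. restr_face (cycle_polytope st ar UNIV) F) = QQ st ar"
    by (rule ext) (simp add: P_char restr_QQ)
  have PU: "cycle_polytope st ar UNIV = QQ st ar UNIV" by (rule P_char)
  have r: "restr_face (cycle_polytope st ar UNIV) F = QQ st ar F" for F
    using fe by metis
  have b: "bij_betw (QQ st ar) {F. F \<noteq> {} \<and> is_full st ar F} {S. is_face (QQ st ar UNIV) S}"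
    unfolding bij_betw_def
  proof
    show "inj_on (QQ st ar) {F. F \<noteq> {} \<and> is_full st ar F}"
    proof (rule inj_onI)
      fix F1 F2 assume "F1 \<in> {F. F \<noteq> {} \<and> is_full st ar F}" "F2 \<in> {F. F \<noteq> {} \<and> is_full st ar F}"
        "QQ st ar F1 = QQ st ar F2"
      then show "F1 = F2" using order_part[of st ar F1 F2] order_part[of st ar F2 F1] by auto
    qed
    show "QQ st ar ` {F. F \<noteq> {} \<and> is_full st ar F} = {S. is_face (QQ st ar UNIV) S}"
    proof
      show "QQ st ar ` {F. F \<noteq> {} \<and> is_full st ar F} \<subseteq> {S. is_face (QQ st ar UNIV) S}"
        using face_of_full by blast
      show "{S. is_face (QQ st ar UNIV) S} \<subseteq> QQ st ar ` {F. F \<noteq> {} \<and> is_full st ar F}"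
      proof
        fix S assume "S \<in> {S. is_face (QQ st ar UNIV) S}"
        then obtain F where "F \<noteq> {}" "is_full st ar F" "S = QQ st ar F"
          using face_surj[of st ar S] by auto
        then show "S \<in> QQ st ar ` {F. F \<noteq> {} \<and> is_full st ar F}" by blast
      qed
    qed
  qed
  have o: "\<forall>F1 F2. F1 \<noteq> {} \<and> is_full st ar F1 \<and> F2 \<noteq> {} \<and> is_full st ar F2 \<longrightarrow>
            (F1 \<subseteq> F2 \<longleftrightarrow> QQ st ar F1 \<subseteq> QQ st ar F2)"
    using QQ_mono order_part by metis
  have d: "\<forall>F. F \<noteq> {} \<and> is_full st ar F \<longrightarrow>
            cycle_polytope st ar F = QQ st ar F \<and>
            aff_dim (QQ st ar F) = int (card F) - int (card V) + int (num_components V st ar F) - 1"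
  proof (intro allI impI conjI)
    fix F assume F: "F \<noteq> {} \<and> is_full st ar F"
    show "cycle_polytope st ar F = QQ st ar F" by (rule P_char)
    show "aff_dim (QQ st ar F) = int (card F) - int (card V) + int (num_components V st ar F) - 1"
      using aff_QQ[of st ar F] F dim_Circ[OF assms, of F] by simp
  qed
  have fe': "restr_face (cycle_polytope st ar UNIV) = QQ st ar"
    by (rule ext) (simp add: P_char restr_QQ)
  show ?thesis unfolding fe' using b o d unfolding PU by simp
qed

end
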